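(* Consider the control-affine system $\dot x = f(x) + g(x)u$ with $f,g$ Lipschitz and $\mathcal{C}^{m-1}$, state set $\mathcal{X}\subset\mathbb{R}^{n_x}$ compact, control set $\mathcal{U}\subset\mathbb{R}^{n_u}$ compact and convex, and a $\mathcal{C}^m$ function $h$ of relative degree $m$. Assume (Assumption 1): the set $\mathcal{X}_e = \{x_e : \exists u_e \in \mathcal{U},\ 0 = f(x_e) + g(x_e)u_e\}$ is closed, convex and known, and $g(x_e)$ has full column rank for every $x_e \in \mathcal{X}_e$. Let $P_{\mathcal{X}_e}(x) = \arg\min\{\|x - x'\|_2 : x' \in \mathcal{X}_e\}$ and $\zeta(x_e) = -g(x_e)^\dagger f(x_e)$. With $\Gamma_i$, $\psi_i$, $a(x)$, $b(x)$ as in the context, let $c(x)$ be a vector orthogonal to $a(x)$ and continuous in $x$, let $d:\mathbb{R}\times\mathbb{R}\to\mathbb{R}$ be continuous with $d(0,0) > 0$, let $u_n$ be a nominal controller, and let $$\pi'(x) = \arg\min_{u \in \mathcal{U}} \|u - u_n(x)\|_2^2 \ \text{ s.t. } \ a(x)^\top u \ge b(x),\ \ c(x)^\top\big[u - \zeta(P_{\mathcal{X}_e}(x))\big] \ge d\big(h(x), \|x - P_{\mathcal{X}_e}(x)\|_2\big).$$ Assume this problem is feasible for each $x \in \mathcal{X}$ and $\pi'(x) \notin \partial\mathcal{U}$. If $a(x) \ne 0$, $c(x) \ne 0$, and $u_n$ is continuous in $x$, then $\pi'$ is continuous in $x$.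
   Context: $h$ has relative degree $m$ means $L_g L_f^{i} h \equiv 0$ for $i = 0,\dots,m-2$. Let $\Gamma_1,\dots,\Gamma_m$ be class $\mathcal{K}$ functions (continuous, strictly increasing, zero at zero) with $\Gamma_i \in \mathcal{C}^{m-i}$; $\psi_0 = h$, $\psi_i = \dot\psi_{i-1} + \Gamma_i(\psi_{i-1})$ for $i = 1,\dots,m-1$ (time derivatives along the system); $a(x) = (L_g L_f^{m-1} h(x))^\top$ and $b(x) = -L_f^m h(x) - \sum_{i=0}^{m-1} L_f^i(\Gamma_{m-i}\circ\psi_{m-i-1})(x)$. $g^\dagger$ denotes the Moore–Penrose pseudoinverse and $\partial\mathcal{U}$ the boundary of $\mathcal{U}$. *)

theory Defs
  imports "HOL-Analysis.Analysis"
begin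

fun Ck :: "nat \<Rightarrow> ('a::euclidean_space \<Rightarrow> 'b::real_normed_vector) \<Rightarrow> bool" where
  "Ck 0 F \<longleftrightarrow> continuous_on UNIV F"
| "Ck (Suc k) F \<longleftrightarrow> continuous_on UNIV F \<and> F differentiable_on UNIV \<and>
     (\<forall>v\<in>Basis. Ck k (\<lambda>x. frechet_derivative F (at x) v))"

definition classK :: "(real \<Rightarrow> real) \<Rightarrow> bool" where
  "classK \<gamma> \<longleftrightarrow> continuous_on UNIV \<gamma> \<and> strict_mono \<gamma> \<and> \<gamma> 0 = 0"

definition lie :: "('a::real_normed_vector \<Rightarrow> 'a) \<Rightarrow> ('a \<Rightarrow> real) \<Rightarrow> 'a \<Rightarrow> real" where
  "lie F \<phi> x = frechet_derivative \<phi> (at x) (F x)"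

text \<open>L_g phi (transposed into a column vector): j-th entry is the Lie derivative
  along the j-th column of g.\<close>
definition lieg :: "(real^'n \<Rightarrow> real^'m^'n) \<Rightarrow> (real^'n \<Rightarrow> real) \<Rightarrow> real^'n \<Rightarrow> real^'m" where
  "lieg G \<phi> x = (\<chi> j. frechet_derivative \<phi> (at x) (column j (G x)))"

fun psi :: "(real^'n \<Rightarrow> real^'n) \<Rightarrow> (nat \<Rightarrow> real \<Rightarrow> real) \<Rightarrow> (real^'n \<Rightarrow> real) \<Rightarrow> nat \<Rightarrow> real^'n \<Rightarrow> real" where
  "psi F \<Gamma> h 0 = h"
| "psi F \<Gamma> h (Suc i) = (\<lambda>x. lie F (psi F \<Gamma> h i) x + \<Gamma> (Suc i) (psi F \<Gamma> h i x))"

definition acbf :: "(real^'n \<Rightarrow> real^'n) \<Rightarrow> (real^'n \<Rightarrow> real^'m^'n) \<Rightarrow> (real^'n \<Rightarrow> real) \<Rightarrow> nat \<Rightarrow> real^'n \<Rightarrow> real^'m" where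
  "acbf F G h m = lieg G ((lie F ^^ (m - 1)) h)"

definition bcbf :: "(real^'n \<Rightarrow> real^'n) \<Rightarrow> (nat \<Rightarrow> real \<Rightarrow> real) \<Rightarrow> (real^'n \<Rightarrow> real) \<Rightarrow> nat \<Rightarrow> real^'n \<Rightarrow> real" where
  "bcbf F \<Gamma> h m x = - (lie F ^^ m) h x
      - (\<Sum>i<m. (lie F ^^ i) (\<lambda>y. \<Gamma> (m - i) (psi F \<Gamma> h (m - i - 1) y)) x)"

definition pinv :: "real^'m^'n \<Rightarrow> real^'n^'m" where
  "pinv A = (THE B. A ** B ** A = A \<and> B ** A ** B = B \<and>
                    transpose (A ** B) = A ** B \<and> transpose (B ** A) = B ** A)"

definition equilibria :: "(real^'n \<Rightarrow> real^'n) \<Rightarrow> (real^'n \<Rightarrow> real^'m^'n) \<Rightarrow> (real^'m) set \<Rightarrow> (real^'n) set" where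
  "equilibria F G U = {xe. \<exists>ue\<in>U. 0 = F xe + G xe *v ue}"

definition zeta :: "(real^'n \<Rightarrow> real^'n) \<Rightarrow> (real^'n \<Rightarrow> real^'m^'n) \<Rightarrow> real^'n \<Rightarrow> real^'m" where
  "zeta F G xe = - (pinv (G xe) *v F xe)"

definition feas :: "(real^'n \<Rightarrow> real^'n) \<Rightarrow> (real^'n \<Rightarrow> real^'m^'n) \<Rightarrow> (real^'n \<Rightarrow> real) \<Rightarrow> nat
    \<Rightarrow> (nat \<Rightarrow> real \<Rightarrow> real) \<Rightarrow> (real^'m) set \<Rightarrow> (real^'n \<Rightarrow> real^'m) \<Rightarrow> (real \<Rightarrow> real \<Rightarrow> real)
    \<Rightarrow> real^'n \<Rightarrow> (real^'m) set" where
  "feas F G h m \<Gamma> U c d x =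
     (let P = closest_point (equilibria F G U) x in
      {u \<in> U. acbf F G h m x \<bullet> u \<ge> bcbf F \<Gamma> h m x \<and>
              c x \<bullet> (u - zeta F G P) \<ge> d (h x) (norm (x - P))})"

definition pi' :: "(real^'n \<Rightarrow> real^'n) \<Rightarrow> (real^'n \<Rightarrow> real^'m^'n) \<Rightarrow> (real^'n \<Rightarrow> real) \<Rightarrow> nat
    \<Rightarrow> (nat \<Rightarrow> real \<Rightarrow> real) \<Rightarrow> (real^'m) set \<Rightarrow> (real^'n \<Rightarrow> real^'m) \<Rightarrow> (real \<Rightarrow> real \<Rightarrow> real)
    \<Rightarrow> (real^'n \<Rightarrow> real^'m) \<Rightarrow> real^'n \<Rightarrow> real^'m" where
  "pi' F G h m \<Gamma> U c d un x =
     arg_min_on (\<lambda>u. (norm (u - un x))\<^sup>2) (feas F G h m \<Gamma> U c d x)"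

end

theory Submission
  imports Defs
begin


lemma pinv_left:
  fixes A :: "real^'m^'n"
  assumes inj: "inj ((*v) A)"
  shows "pinv A ** A = mat 1"
proof -
  define P where "P B \<longleftrightarrow> A ** B ** A = A \<and> B ** A ** B = B \<and>
                    transpose (A ** B) = A ** B \<and> transpose (B ** A) = B ** A" for B :: "real^'n^'m"
  have left: "B ** A = mat 1" if "A ** B ** A = A" for B :: "real^'n^'m"
  proof -
    have "A *v ((B ** A) *v v) = A *v v" for v
      by (metis matrix_vector_mul_assoc that)
    then have "(B ** A) *v v = v" for v using inj by (meson injD)
    then show ?thesis by (simp add: matrix_eq)
  qed
  define M where "M = transpose A ** A"
  have injM: "inj ((*v) M)"
  proof (rule injI)
    fix x y assume "M *v x = M *v y"
    then have "M *v (x - y) = 0" by (simp add: matrix_vector_mult_diff_distrib)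
    then have "(x - y) \<bullet> (M *v (x - y)) = 0" by simp
    moreover have "(x - y) \<bullet> (M *v (x - y)) = (A *v (x - y)) \<bullet> (A *v (x - y))"
      unfolding M_def by (simp add: matrix_vector_mul_assoc[symmetric]) (metis dot_lmul_matrix inner_commute)
    ultimately have "A *v (x - y) = 0" by simp
    then have "A *v x = A *v y" by (simp add: matrix_vector_mult_diff_distrib)
    then show "x = y" using inj by (meson injD)
  qed
  then obtain L where L1: "L ** M = mat 1" using matrix_left_invertible_injective by blast
  then have L2: "M ** L = mat 1" using matrix_left_right_inverse by blast
  have Msym: "transpose M = M" unfolding M_def by (simp add: matrix_transpose_mul)
  have "transpose L ** M = mat 1"
    by (metis L2 Msym matrix_transpose_mul transpose_mat)
  then have Lsym: "transpose L = L"
    by (metis L2 matrix_mul_assoc matrix_mul_lid matrix_mul_rid)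
  define B0 where "B0 = L ** transpose A"
  have B0A: "B0 ** A = mat 1" unfolding B0_def using L1 M_def by (simp add: matrix_mul_assoc[symmetric])
  have "P B0"
    unfolding P_def
  proof (intro conjI)
    show "A ** B0 ** A = A" using B0A by (simp add: matrix_mul_assoc[symmetric])
    show "B0 ** A ** B0 = B0" using B0A by simp
    show "transpose (A ** B0) = A ** B0" unfolding B0_def
      by (simp add: matrix_transpose_mul Lsym matrix_mul_assoc)
    show "transpose (B0 ** A) = B0 ** A" using B0A by simp
  qed
  moreover have "B = C" if "P B" "P C" for B C
  proof -
    have BA: "B ** A = mat 1" using left that(1) P_def by blast
    have CA: "C ** A = mat 1" using left that(2) P_def by blast
    have s1: "transpose (A ** B) = A ** B" and s2: "transpose (A ** C) = A ** C"
      using that P_def by blast+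
    have e1: "(A ** B) ** (A ** C) = A ** C"
      by (metis BA matrix_mul_assoc matrix_mul_rid)
    have e2: "(A ** C) ** (A ** B) = A ** B"
      by (metis CA matrix_mul_assoc matrix_mul_rid)
    have "A ** B = transpose ((A ** C) ** (A ** B))" using e2 s1 by simp
    also have "\<dots> = (A ** B) ** (A ** C)" using s1 s2 by (simp add: matrix_transpose_mul)
    also have "\<dots> = A ** C" by (rule e1)
    finally have ABC: "A ** B = A ** C" .
    have "B = B ** (A ** B)" using that P_def by (simp add: matrix_mul_assoc)
    also have "\<dots> = (B ** A) ** C" using ABC by (simp add: matrix_mul_assoc)
    also have "\<dots> = C" using BA by simp
    finally show ?thesis .
  qed
  ultimately have "P (pinv A)" unfolding pinv_def P_def[symmetric]
    by (metis (mono_tags, lifting) theI)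
  then show ?thesis using left P_def by blast
qed




lemma Ck_Suc_mono: "Ck (Suc k) F \<Longrightarrow> Ck k F"
  by (induction k arbitrary: F) auto

lemma Ck_add_mono: "Ck (j + i) F \<Longrightarrow> Ck j F"
proof (induction i)
  case (Suc i)
  then show ?case using Ck_Suc_mono[of "j + i" F] by simp
qed simp

lemma Ck_le: "j \<le> k \<Longrightarrow> Ck k F \<Longrightarrow> Ck j F"
  by (metis Ck_add_mono le_Suc_ex)

lemma Ck_cont: "Ck k F \<Longrightarrow> continuous_on UNIV F"
  by (cases k) auto

lemma Ck_hasder: "F differentiable_on UNIV \<Longrightarrow> (F has_derivative frechet_derivative F (at x)) (at x)"
proof -
  assume "F differentiable_on UNIV"
  then have "F differentiable (at x)" unfolding differentiable_on_def by simp
  then show ?thesis using frechet_derivative_works by blast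
qed

lemma Ck_SucI:
  fixes F :: "'a::euclidean_space \<Rightarrow> 'b::real_normed_vector"
  assumes "continuous_on UNIV F"
    and "\<And>x. (F has_derivative D x) (at x)"
    and "\<And>v. v \<in> Basis \<Longrightarrow> Ck k (\<lambda>x. D x v)"
  shows "Ck (Suc k) F"
proof -
  have e: "frechet_derivative F (at x) = D x" for x
    using frechet_derivative_at[OF assms(2)] by simp
  show ?thesis
    unfolding Ck.simps
  proof (intro conjI ballI)
    show "continuous_on UNIV F" by fact
    show "F differentiable_on UNIV"
      using assms(2) unfolding differentiable_on_def differentiable_def by blast
    fix v :: 'a assume "v \<in> Basis"
    then show "Ck k (\<lambda>x. frechet_derivative F (at x) v)"
      unfolding e using assms(3) by simp
  qed
qed

lemma Ck_SucD:
  assumes "Ck (Suc k) F"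
  shows "continuous_on UNIV F" "\<And>x. (F has_derivative frechet_derivative F (at x)) (at x)"
    "\<And>v. v \<in> Basis \<Longrightarrow> Ck k (\<lambda>x. frechet_derivative F (at x) v)"
  using assms Ck_hasder by auto

lemma Ck_linear: "bounded_linear L \<Longrightarrow> Ck k F \<Longrightarrow> Ck k (\<lambda>x. L (F x))"
proof (induction k arbitrary: F)
  case 0
  then show ?case using continuous_on_compose2[OF linear_continuous_on[OF 0(1)], of UNIV F UNIV] by simp
next
  case (Suc k)
  note D = Ck_SucD[OF Suc(3)]
  show ?case
  proof (rule Ck_SucI)
    show "continuous_on UNIV (\<lambda>x. L (F x))"
      using continuous_on_compose2[OF linear_continuous_on[OF Suc(2)], of UNIV F UNIV] D(1) by simp
    show "((\<lambda>x. L (F x)) has_derivative (\<lambda>h. L (frechet_derivative F (at x) h))) (at x)" for x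
      by (rule bounded_linear.has_derivative[OF Suc(2) D(2)])
    show "Ck k (\<lambda>x. L (frechet_derivative F (at x) v))" if "v \<in> Basis" for v
      using Suc.IH[OF Suc(2) D(3)[OF that]] .
  qed
qed

lemma Ck_const: "Ck k (\<lambda>x. c)"
proof (induction k arbitrary: c)
  case (Suc k)
  show ?case
    by (rule Ck_SucI[where D="\<lambda>x h. 0"]) (auto intro: Suc.IH)
qed simp

lemma Ck_plus: "Ck k F \<Longrightarrow> Ck k G \<Longrightarrow> Ck k (\<lambda>x. F x + G x)"
proof (induction k arbitrary: F G)
  case 0
  then show ?case by (simp add: continuous_on_add)
next
  case (Suc k)
  note D = Ck_SucD[OF Suc(2)] and E = Ck_SucD[OF Suc(3)]
  show ?case
  proof (rule Ck_SucI)
    show "continuous_on UNIV (\<lambda>x. F x + G x)" using D(1) E(1) by (rule continuous_on_add)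
    show "((\<lambda>x. F x + G x) has_derivative (\<lambda>h. frechet_derivative F (at x) h + frechet_derivative G (at x) h)) (at x)" for x
      by (rule has_derivative_add[OF D(2) E(2)])
    show "Ck k (\<lambda>x. frechet_derivative F (at x) v + frechet_derivative G (at x) v)" if "v \<in> Basis" for v
      using Suc.IH[OF D(3)[OF that] E(3)[OF that]] .
  qed
qed

lemma Ck_minus: "Ck k F \<Longrightarrow> Ck k (\<lambda>x. - F x)"
  using Ck_linear[of "\<lambda>y. - y"] bounded_linear_minus[OF bounded_linear_ident] by auto

lemma Ck_sum: "finite S \<Longrightarrow> (\<And>i. i \<in> S \<Longrightarrow> Ck k (F i)) \<Longrightarrow> Ck k (\<lambda>x. \<Sum>i\<in>S. F i x)"
proof (induction S rule: finite_induct)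
  case empty
  then show ?case using Ck_const[of k 0] by simp
next
  case (insert a S)
  then show ?case using Ck_plus[of k "F a" "\<lambda>x. \<Sum>i\<in>S. F i x"] by simp
qed

lemma Ck_mult: fixes F G :: "'a::euclidean_space \<Rightarrow> real"
  shows "Ck k F \<Longrightarrow> Ck k G \<Longrightarrow> Ck k (\<lambda>x. F x * G x)"
proof (induction k arbitrary: F G)
  case 0
  then show ?case by (simp add: continuous_on_mult)
next
  case (Suc k)
  note D = Ck_SucD[OF Suc(2)] and E = Ck_SucD[OF Suc(3)]
  show ?case
  proof (rule Ck_SucI)
    show "continuous_on UNIV (\<lambda>x. F x * G x)" using D(1) E(1) by (rule continuous_on_mult)
    show "((\<lambda>x. F x * G x) has_derivative (\<lambda>h. F x * frechet_derivative G (at x) h + frechet_derivative F (at x) h * G x)) (at x)" for x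
      by (rule has_derivative_mult[OF D(2) E(2)])
    show "Ck k (\<lambda>x. F x * frechet_derivative G (at x) v + frechet_derivative F (at x) v * G x)" if "v \<in> Basis" for v
      using Ck_plus[OF Suc.IH[OF Ck_Suc_mono[OF Suc(2)] E(3)[OF that]] Suc.IH[OF D(3)[OF that] Ck_Suc_mono[OF Suc(3)]]] .
  qed
qed

lemma real_linear_1: "linear (L :: real \<Rightarrow> real) \<Longrightarrow> L s = s * L 1"
  by (metis linear_scale mult.right_neutral real_scaleR_def)

lemma Ck_compose: fixes \<Gamma> :: "real \<Rightarrow> real" and \<psi> :: "'a::euclidean_space \<Rightarrow> real"
  shows "Ck k \<Gamma> \<Longrightarrow> Ck k \<psi> \<Longrightarrow> Ck k (\<lambda>x. \<Gamma> (\<psi> x))"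
proof (induction k arbitrary: \<Gamma>)
  case 0
  then show ?case using continuous_on_compose2[of UNIV \<Gamma> UNIV \<psi>] by simp
next
  case (Suc k)
  note D = Ck_SucD[OF Suc(2)] and E = Ck_SucD[OF Suc(3)]
  have lin: "frechet_derivative \<Gamma> (at t) s = frechet_derivative \<Gamma> (at t) 1 * s" for t s
  proof -
    have "frechet_derivative \<Gamma> (at t) s = s * frechet_derivative \<Gamma> (at t) 1"
      by (rule real_linear_1[OF has_derivative_linear[OF D(2)[of t]]])
    then show ?thesis by (simp only: mult.commute)
  qed
  show ?case
  proof (rule Ck_SucI)
    show "continuous_on UNIV (\<lambda>x. \<Gamma> (\<psi> x))" using continuous_on_compose2[OF D(1) E(1)] by simp
    show "((\<lambda>x. \<Gamma> (\<psi> x)) has_derivative (\<lambda>h. frechet_derivative \<Gamma> (at (\<psi> x)) 1 * frechet_derivative \<psi> (at x) h)) (at x)" for x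
    proof -
      have "(\<lambda>h. frechet_derivative \<Gamma> (at (\<psi> x)) (frechet_derivative \<psi> (at x) h)) = (\<lambda>h. frechet_derivative \<Gamma> (at (\<psi> x)) 1 * frechet_derivative \<psi> (at x) h)"
        by (rule ext) (rule lin)
      then show ?thesis using has_derivative_compose[OF E(2) D(2)] by metis
    qed
    show "Ck k (\<lambda>x. frechet_derivative \<Gamma> (at (\<psi> x)) 1 * frechet_derivative \<psi> (at x) v)" if "v \<in> Basis" for v
      using Ck_mult[OF Suc.IH[OF D(3)[of 1] Ck_Suc_mono[OF Suc(3)]] E(3)[OF that]] by simp
  qed
qed

lemma frechet_repr:
  fixes \<phi> :: "'a::euclidean_space \<Rightarrow> real"
  assumes "\<phi> differentiable_on UNIV"
  shows "frechet_derivative \<phi> (at x) y = (\<Sum>b\<in>Basis. (y \<bullet> b) * frechet_derivative \<phi> (at x) b)"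
proof -
  have "linear (frechet_derivative \<phi> (at x))"
    using Ck_hasder[OF assms] by (rule has_derivative_linear)
  then have "frechet_derivative \<phi> (at x) (\<Sum>b\<in>Basis. (y \<bullet> b) *\<^sub>R b) = (\<Sum>b\<in>Basis. (y \<bullet> b) * frechet_derivative \<phi> (at x) b)"
    by (simp add: linear_sum linear_scale)
  then show ?thesis by (simp add: euclidean_representation)
qed

lemma Ck_lie: fixes \<phi> :: "'a::euclidean_space \<Rightarrow> real"
  shows "Ck (Suc k) \<phi> \<Longrightarrow> Ck k F \<Longrightarrow> Ck k (lie F \<phi>)"
proof -
  assume a: "Ck (Suc k) \<phi>" "Ck k F"
  have "lie F \<phi> = (\<lambda>x. \<Sum>b\<in>Basis. (F x \<bullet> b) * frechet_derivative \<phi> (at x) b)"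
    using a(1) unfolding lie_def fun_eq_iff by (intro allI frechet_repr) simp
  moreover have "Ck k (\<lambda>x. \<Sum>b\<in>Basis. (F x \<bullet> b) * frechet_derivative \<phi> (at x) b)"
  proof (rule Ck_sum)
    fix b :: 'a assume b: "b \<in> Basis"
    show "Ck k (\<lambda>x. (F x \<bullet> b) * frechet_derivative \<phi> (at x) b)"
      using Ck_mult[OF Ck_linear[OF bounded_linear_inner_left a(2)] Ck_SucD(3)[OF a(1) b]] .
  qed simp
  ultimately show ?thesis by metis
qed

lemma cont_frechet_field: fixes \<phi> :: "'a::euclidean_space \<Rightarrow> real"
  shows "Ck (Suc 0) \<phi> \<Longrightarrow> continuous_on UNIV V \<Longrightarrow> continuous_on UNIV (\<lambda>x. frechet_derivative \<phi> (at x) (V x))"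
proof -
  assume a: "Ck (Suc 0) \<phi>" "continuous_on UNIV V"
  have "(\<lambda>x. frechet_derivative \<phi> (at x) (V x)) = (\<lambda>x. \<Sum>b\<in>Basis. (V x \<bullet> b) * frechet_derivative \<phi> (at x) b)"
    using a(1) unfolding fun_eq_iff by (intro allI frechet_repr) simp
  moreover have "continuous_on UNIV (\<lambda>x. \<Sum>b\<in>Basis. (V x \<bullet> b) * frechet_derivative \<phi> (at x) b)"
  proof (rule continuous_on_sum)
    fix b :: 'a assume b: "b \<in> Basis"
    have "continuous_on UNIV (\<lambda>x. frechet_derivative \<phi> (at x) b)"
      using Ck_SucD(3)[OF a(1) b] by simp
    then show "continuous_on UNIV (\<lambda>x. (V x \<bullet> b) * frechet_derivative \<phi> (at x) b)"
      using a(2) by (intro continuous_on_mult continuous_on_inner continuous_on_const)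
  qed
  ultimately show ?thesis by metis
qed

lemma Ck_funpow_lie: fixes \<phi> :: "'a::euclidean_space \<Rightarrow> real"
  shows "Ck n F \<Longrightarrow> Ck (i + k) \<phi> \<Longrightarrow> i + k \<le> n + 1 \<Longrightarrow> Ck k ((lie F ^^ i) \<phi>)"
proof (induction i arbitrary: k)
  case 0
  then show ?case by simp
next
  case (Suc i)
  have "Ck (Suc k) ((lie F ^^ i) \<phi>)" using Suc.prems by (intro Suc.IH) auto
  moreover have "Ck k F" using Suc.prems by (intro Ck_le[of k n]) auto
  ultimately show ?case by (simp add: Ck_lie)
qed




lemma argmin_props:
  fixes Y :: "'u::euclidean_space" and S :: "'u set"
  assumes "compact S" "S \<noteq> {}"
  shows "arg_min_on (\<lambda>u. (norm (u - Y))\<^sup>2) S \<in> S \<and>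
         (\<forall>u\<in>S. norm (arg_min_on (\<lambda>u. (norm (u - Y))\<^sup>2) S - Y) \<le> norm (u - Y))"
proof -
  have "continuous_on S (\<lambda>u. (norm (u - Y))\<^sup>2)" by (intro continuous_intros)
  then obtain x where x: "x \<in> S" "\<forall>y\<in>S. (norm (x - Y))\<^sup>2 \<le> (norm (y - Y))\<^sup>2"
    using continuous_attains_inf[OF assms] by blast
  then have "\<exists>x. is_arg_min (\<lambda>u. (norm (u - Y))\<^sup>2) (\<lambda>x. x \<in> S) x"
    unfolding is_arg_min_def by (auto simp: not_less)
  then have "is_arg_min (\<lambda>u. (norm (u - Y))\<^sup>2) (\<lambda>x. x \<in> S) (arg_min_on (\<lambda>u. (norm (u - Y))\<^sup>2) S)"
    unfolding arg_min_on_def arg_min_def by (rule someI_ex)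
  then show ?thesis
    unfolding is_arg_min_def by (auto simp: not_less intro: power2_le_imp_le)
qed

lemma aux_lin: "(a::real) \<le> b + c \<Longrightarrow> d \<le> (a - b)/2 \<Longrightarrow> c \<le> d \<Longrightarrow> 0 < a - b \<Longrightarrow> False" by (simp add: field_simps)
lemma aux_par: "(X::real) + D = 2 * P + 2 * Q \<Longrightarrow> 0 < D \<Longrightarrow> P \<le> Q \<Longrightarrow> X < 4 * Q" by linarith
lemma aux_nv1: "0 \<le> (n::real) \<Longrightarrow> 0 \<le> n + 1" by (smt (verit))
lemma aux_nv: "0 \<le> (n::real) \<Longrightarrow> 0 < 2 * (n + 1)" by (smt (verit))

lemma argmin_cont:
  fixes A C Y :: "'x::euclidean_space \<Rightarrow> 'u::euclidean_space" and B E :: "'x \<Rightarrow> real"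
  assumes U: "compact U" "convex U" and X: "compact X"
    and cA: "continuous_on X A" and cB: "continuous_on X B" and cC: "continuous_on X C"
    and cE: "continuous_on X E" and cY: "continuous_on X Y"
    and Anz: "\<forall>x\<in>X. A x \<noteq> 0" and Cnz: "\<forall>x\<in>X. C x \<noteq> 0" and orth: "\<forall>x\<in>X. C x \<bullet> A x = 0"
    and ne: "\<forall>x\<in>X. {u\<in>U. A x \<bullet> u \<ge> B x \<and> C x \<bullet> u \<ge> E x} \<noteq> {}"
    and int: "\<forall>x\<in>X. arg_min_on (\<lambda>u. (norm (u - Y x))\<^sup>2) {u\<in>U. A x \<bullet> u \<ge> B x \<and> C x \<bullet> u \<ge> E x} \<notin> frontier U"
  shows "continuous_on X (\<lambda>x. arg_min_on (\<lambda>u. (norm (u - Y x))\<^sup>2) {u\<in>U. A x \<bullet> u \<ge> B x \<and> C x \<bullet> u \<ge> E x})"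
proof -
  define FS where "FS x = {u\<in>U. A x \<bullet> u \<ge> B x \<and> C x \<bullet> u \<ge> E x}" for x
  define \<pi> where "\<pi> x = arg_min_on (\<lambda>u. (norm (u - Y x))\<^sup>2) (FS x)" for x
  have FS_closed: "closed (FS x)" for x
  proof -
    have "FS x = U \<inter> {u. A x \<bullet> u \<ge> B x} \<inter> {u. C x \<bullet> u \<ge> E x}" unfolding FS_def by auto
    then show ?thesis using compact_imp_closed[OF U(1)]
      by (simp add: closed_Int closed_halfspace_ge)
  qed
  have FS_cpt: "compact (FS x)" for x
  proof -
    have "U \<inter> FS x = FS x" unfolding FS_def by auto
    then show ?thesis using compact_Int_closed[OF U(1) FS_closed[of x]] by simp
  qed
  have M: "\<pi> x \<in> FS x \<and> (\<forall>u\<in>FS x. norm (\<pi> x - Y x) \<le> norm (u - Y x))" if "x \<in> X" for x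
    unfolding \<pi>_def using argmin_props[OF FS_cpt] ne that unfolding FS_def by blast
  have key: "\<pi> x0 = ub" if s: "\<forall>n. s n \<in> X" "x0 \<in> X" "s \<longlonglongrightarrow> x0" "(\<pi> \<circ> s) \<longlonglongrightarrow> ub" for s x0 ub
  proof -
    have sq: "(F \<circ> s) \<longlonglongrightarrow> F x0" if "continuous_on X F" for F :: "'x \<Rightarrow> 'b::topological_space"
      using that s unfolding continuous_on_sequentially by blast
    note lA = sq[OF cA] and lB = sq[OF cB] and lC = sq[OF cC] and lE = sq[OF cE] and lY = sq[OF cY]
    have lpi: "(\<lambda>n. \<pi> (s n)) \<longlonglongrightarrow> ub" using s(4) by (simp add: comp_def)
    define u0 where "u0 = \<pi> x0"
    have Mx0: "u0 \<in> FS x0" "\<forall>u\<in>FS x0. norm (u0 - Y x0) \<le> norm (u - Y x0)"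
      using M[OF s(2)] u0_def by auto
    have ubU: "ub \<in> U"
      using closed_sequentially[OF compact_imp_closed[OF U(1)] _ lpi] M s(1) unfolding FS_def by auto
    have ubA: "A x0 \<bullet> ub \<ge> B x0"
    proof -
      have "(\<lambda>n. A (s n) \<bullet> \<pi> (s n) - B (s n)) \<longlonglongrightarrow> A x0 \<bullet> ub - B x0"
        using lA lB lpi by (intro tendsto_intros) (auto simp: comp_def)
      moreover have "\<forall>n. 0 \<le> A (s n) \<bullet> \<pi> (s n) - B (s n)" using M s(1) unfolding FS_def by auto
      ultimately have "0 \<le> A x0 \<bullet> ub - B x0" by (intro LIMSEQ_le_const) auto
      then show ?thesis by simp
    qed
    have ubC: "C x0 \<bullet> ub \<ge> E x0"
    proof -
      have "(\<lambda>n. C (s n) \<bullet> \<pi> (s n) - E (s n)) \<longlonglongrightarrow> C x0 \<bullet> ub - E x0"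
        using lC lE lpi by (intro tendsto_intros) (auto simp: comp_def)
      moreover have "\<forall>n. 0 \<le> C (s n) \<bullet> \<pi> (s n) - E (s n)" using M s(1) unfolding FS_def by auto
      ultimately have "0 \<le> C x0 \<bullet> ub - E x0" by (intro LIMSEQ_le_const) auto
      then show ?thesis by simp
    qed
    have ubF: "ub \<in> FS x0" using ubU ubA ubC unfolding FS_def by auto
    have u0int: "u0 \<in> interior U"
      using int s(2) Mx0(1) compact_imp_closed[OF U(1)] unfolding u0_def \<pi>_def FS_def
      by (auto simp: frontier_def closure_closed)
    then obtain \<delta> where \<delta>: "\<delta> > 0" "ball u0 \<delta> \<subseteq> U" using mem_interior by blast
    define v where "v = (1 / (A x0 \<bullet> A x0)) *\<^sub>R A x0 + (1 / (C x0 \<bullet> C x0)) *\<^sub>R C x0"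
    have Av: "A x0 \<bullet> v = 1" and Cv: "C x0 \<bullet> v = 1"
      using Anz Cnz orth s(2) unfolding v_def
      by (auto simp: inner_add_right inner_commute)
    have step: "norm (ub - Y x0) \<le> norm (u0 - Y x0) + t * norm v" if t: "t > 0" "t * norm v < \<delta>" for t
    proof -
      define w where "w = u0 + t *\<^sub>R v"
      have wU: "w \<in> U" using \<delta> t unfolding w_def by (auto simp: dist_norm intro!: subsetD[OF \<delta>(2)])
      have wA: "A x0 \<bullet> w - B x0 > 0"
        using Mx0(1) t Av unfolding w_def FS_def by (auto simp: inner_add_right)
      have wC: "C x0 \<bullet> w - E x0 > 0"
        using Mx0(1) t Cv unfolding w_def FS_def by (auto simp: inner_add_right)
      have "(\<lambda>n. A (s n) \<bullet> w - B (s n)) \<longlonglongrightarrow> A x0 \<bullet> w - B x0"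
        using lA lB by (intro tendsto_intros) (auto simp: comp_def)
      then have e1: "eventually (\<lambda>n. A (s n) \<bullet> w - B (s n) > 0) sequentially"
        using wA by (rule order_tendstoD)
      have "(\<lambda>n. C (s n) \<bullet> w - E (s n)) \<longlonglongrightarrow> C x0 \<bullet> w - E x0"
        using lC lE by (intro tendsto_intros) (auto simp: comp_def)
      then have e2: "eventually (\<lambda>n. C (s n) \<bullet> w - E (s n) > 0) sequentially"
        using wC by (rule order_tendstoD)
      have ev: "eventually (\<lambda>n. norm (\<pi> (s n) - Y (s n)) \<le> norm (w - Y (s n))) sequentially"
        using e1 e2
      proof eventually_elim
        case (elim n)
        then have "w \<in> FS (s n)" using wU unfolding FS_def by auto
        then show ?case using M s(1) by blast
      qed
      have l1: "(\<lambda>n. norm (\<pi> (s n) - Y (s n))) \<longlonglongrightarrow> norm (ub - Y x0)"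
        using lpi lY by (intro tendsto_intros) (auto simp: comp_def)
      have l2: "(\<lambda>n. norm (w - Y (s n))) \<longlonglongrightarrow> norm (w - Y x0)"
        using lY by (intro tendsto_intros) (auto simp: comp_def)
      have "norm (ub - Y x0) \<le> norm (w - Y x0)"
        using tendsto_le[OF _ l2 l1 ev] by simp
      also have "norm (w - Y x0) \<le> norm (u0 - Y x0) + t * norm v"
        unfolding w_def using norm_triangle_ineq[of "u0 - Y x0" "t *\<^sub>R v"] t
        by (simp add: algebra_simps)
      finally show ?thesis .
    qed
    have le: "norm (ub - Y x0) \<le> norm (u0 - Y x0)"
    proof (rule ccontr)
      assume "\<not> ?thesis"
      then have gap: "norm (ub - Y x0) - norm (u0 - Y x0) > 0" by simp
      define t where "t = min (\<delta> / (2 * (norm v + 1))) ((norm (ub - Y x0) - norm (u0 - Y x0)) / (2 * (norm v + 1)))"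
      have nv: "2 * (norm v + 1) > 0" by (rule aux_nv[OF norm_ge_zero])
      have tpos: "t > 0" unfolding t_def using \<delta> gap nv by (auto simp: zero_less_divide_iff)
      have "t * norm v \<le> t * (norm v + 1)" using tpos by (simp add: mult_left_mono)
      have half: "D / (2 * (norm v + 1)) * (norm v + 1) = D / 2" for D
        using nv by (simp add: field_simps)
      have nv1: "norm v + 1 \<ge> 0" by (rule aux_nv1[OF norm_ge_zero])
      have "t * (norm v + 1) \<le> \<delta> / (2 * (norm v + 1)) * (norm v + 1)"
        unfolding t_def by (rule mult_right_mono[OF min.cobounded1 nv1])
      then have t1: "t * (norm v + 1) \<le> \<delta> / 2" using half[of \<delta>] by linarith
      have "t * (norm v + 1) \<le> (norm (ub - Y x0) - norm (u0 - Y x0)) / (2 * (norm v + 1)) * (norm v + 1)"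
        unfolding t_def by (rule mult_right_mono[OF min.cobounded2 nv1])
      then have t2: "t * (norm v + 1) \<le> (norm (ub - Y x0) - norm (u0 - Y x0)) / 2"
        using half[of "norm (ub - Y x0) - norm (u0 - Y x0)"] by linarith
      have "t * norm v \<le> t * (norm v + 1)" using tpos by simp
      then have "t * norm v < \<delta>" using t1 \<delta> by linarith
      from step[OF tpos this] have "norm (ub - Y x0) \<le> norm (u0 - Y x0) + t * norm v" .
      then show False using aux_lin t2 \<open>t * norm v \<le> t * (norm v + 1)\<close> gap by blast
    qed
    show ?thesis
    proof (rule ccontr)
      assume ne: "\<pi> x0 \<noteq> ub"
      define p where "p = ub - Y x0"
      define q where "q = u0 - Y x0"
      have pq: "p \<noteq> q" using ne unfolding p_def q_def u0_def by auto
      define mm where "mm = (1/2) *\<^sub>R ub + (1/2) *\<^sub>R u0"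
      have mmF: "mm \<in> FS x0"
      proof -
        have "mm \<in> U" unfolding mm_def using ubU Mx0(1) U(2) unfolding FS_def
          by (intro convexD) auto
        moreover have "A x0 \<bullet> mm \<ge> B x0" "C x0 \<bullet> mm \<ge> E x0"
          using ubA ubC Mx0(1) unfolding mm_def FS_def by (auto simp: inner_add_right)
        ultimately show ?thesis unfolding FS_def by auto
      qed
      have mmY: "mm - Y x0 = (1/2) *\<^sub>R (p + q)"
      proof -
        have "(1/2) *\<^sub>R (p + q) = (1/2) *\<^sub>R (ub + u0) - (1/2) *\<^sub>R (Y x0 + Y x0)"
          unfolding p_def q_def by (simp add: algebra_simps)
        then show ?thesis unfolding mm_def scaleR_half_double by (simp add: algebra_simps)
      qed
      have par: "(norm (p + q))\<^sup>2 + (norm (p - q))\<^sup>2 = 2 * (norm p)\<^sup>2 + 2 * (norm q)\<^sup>2"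
        by (simp add: power2_norm_eq_inner inner_add_left inner_add_right inner_diff_left inner_diff_right inner_commute)
      have "norm (p - q) > 0" using pq by simp
      then have d2: "(norm (p - q))\<^sup>2 > 0" by simp
      have pq2: "(norm p)\<^sup>2 \<le> (norm q)\<^sup>2" using le unfolding p_def q_def by (simp add: power_mono)
      have "(norm (p + q))\<^sup>2 < 4 * (norm q)\<^sup>2"
        by (rule aux_par[OF par d2 pq2])
      moreover have nm: "norm (mm - Y x0) = norm (p + q) / 2" unfolding mmY by simp
      have sq: "(norm (mm - Y x0))\<^sup>2 = (norm (p + q))\<^sup>2 / 4" unfolding nm by (simp add: power_divide)
      ultimately have lt: "(norm (mm - Y x0))\<^sup>2 < (norm q)\<^sup>2" unfolding sq by simp
      have "norm q \<le> norm (mm - Y x0)" using Mx0(2) mmF unfolding q_def by blast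
      then have "(norm q)\<^sup>2 \<le> (norm (mm - Y x0))\<^sup>2" by (rule power_mono) simp
      from leD[OF this] lt show False by contradiction
    qed
  qed
  have "continuous_on X \<pi>"
  proof (rule continuous_from_closed_graph[OF U(1)])
    show "\<pi> \<in> X \<rightarrow> U" using M unfolding FS_def by blast
    show "closed ((\<lambda>x. (x, \<pi> x)) ` X)"
      unfolding closed_sequential_limits
    proof (intro allI impI, elim conjE)
      fix z :: "nat \<Rightarrow> 'x \<times> 'u" and l
      assume zin: "\<forall>n. z n \<in> (\<lambda>x. (x, \<pi> x)) ` X" and zl: "z \<longlonglongrightarrow> l"
      define s where "s n = fst (z n)" for n
      have zs1: "z n = (s n, \<pi> (s n)) \<and> s n \<in> X" for n
      proof -
        obtain x where "x \<in> X" "z n = (x, \<pi> x)" using zin by blast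
        then show ?thesis unfolding s_def by simp
      qed
      then have zs: "z n = (s n, \<pi> (s n))" "s n \<in> X" for n by auto
      have l1: "s \<longlonglongrightarrow> fst l" using tendsto_fst[OF zl] unfolding s_def by simp
      have sndz: "(\<lambda>n. snd (z n)) = \<pi> \<circ> s"
      proof
        fix n show "snd (z n) = (\<pi> \<circ> s) n" using zs(1)[of n] by simp
      qed
      have l2: "(\<pi> \<circ> s) \<longlonglongrightarrow> snd l" using tendsto_snd[OF zl] unfolding sndz .
      have sX: "\<forall>n. s n \<in> X" using zs(2) by blast
      have x0: "fst l \<in> X" using closed_sequentially[OF compact_imp_closed[OF X] _ l1] sX by blast
      have "\<pi> (fst l) = snd l" by (rule key[OF sX x0 l1 l2])
      then have "l = (\<lambda>x. (x, \<pi> x)) (fst l)" by (simp add: prod_eq_iff)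
      then show "l \<in> (\<lambda>x. (x, \<pi> x)) ` X" using x0 by (rule image_eqI)
    qed
  qed
  then show ?thesis unfolding \<pi>_def FS_def .
qed




lemma psi_Ck:
  assumes f: "Ck (m - 1) f" and h: "Ck m h" and G: "\<forall>i\<in>{1..m}. Ck (m - i) (\<Gamma> i)"
  shows "j \<le> m \<Longrightarrow> Ck (m - j) (psi f \<Gamma> h j)"
proof (induction j)
  case 0
  then show ?case using h by simp
next
  case (Suc j)
  define k where "k = m - Suc j"
  have mj: "m - j = Suc k" using Suc.prems unfolding k_def by simp
  have pj: "Ck (Suc k) (psi f \<Gamma> h j)" using Suc by (simp add: mj)
  have fk: "Ck k f" using f by (rule Ck_le[rotated]) (simp add: k_def)
  have l: "Ck k (lie f (psi f \<Gamma> h j))" by (rule Ck_lie[OF pj fk])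
  have g: "Ck k (\<Gamma> (Suc j))" using G Suc.prems unfolding k_def by auto
  have c: "Ck k (\<lambda>x. \<Gamma> (Suc j) (psi f \<Gamma> h j x))" by (rule Ck_compose[OF g Ck_Suc_mono[OF pj]])
  have "Ck k (\<lambda>x. lie f (psi f \<Gamma> h j) x + \<Gamma> (Suc j) (psi f \<Gamma> h j x))" by (rule Ck_plus[OF l c])
  then show ?case unfolding k_def by simp
qed

lemma cont_b:
  assumes m: "m \<ge> 1" and f: "Ck (m - 1) f" and h: "Ck m h" and G: "\<forall>i\<in>{1..m}. Ck (m - i) (\<Gamma> i)"
  shows "continuous_on UNIV (bcbf f \<Gamma> h m)"
proof -
  have e: "bcbf f \<Gamma> h m = (\<lambda>x. - (lie f ^^ m) h x
      - (\<Sum>i<m. (lie f ^^ i) (\<lambda>y. \<Gamma> (m - i) (psi f \<Gamma> h (m - i - 1) y)) x))"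
    by (rule ext) (simp add: bcbf_def)
  have c1: "Ck 0 ((lie f ^^ m) h)"
    by (rule Ck_funpow_lie[OF f]) (use h m in auto)
  have c2: "Ck 0 ((lie f ^^ i) (\<lambda>y. \<Gamma> (m - i) (psi f \<Gamma> h (m - i - 1) y)))" if i: "i < m" for i
  proof (rule Ck_funpow_lie[OF f])
    have mi: "m - i \<in> {1..m}" using i by simp
    have "m - (m - i) = i" using i by simp
    then have g: "Ck i (\<Gamma> (m - i))" using G mi by metis
    have "Ck (m - (m - i - 1)) (psi f \<Gamma> h (m - i - 1))" by (rule psi_Ck[OF f h G]) simp
    then have "Ck i (psi f \<Gamma> h (m - i - 1))" by (rule Ck_le[rotated]) (use i in simp)
    then show "Ck (i + 0) (\<lambda>y. \<Gamma> (m - i) (psi f \<Gamma> h (m - i - 1) y))"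
      using Ck_compose[OF g] by simp
    show "i + 0 \<le> m - 1 + 1" using i by simp
  qed
  have "Ck 0 (\<lambda>x. - (lie f ^^ m) h x
      - (\<Sum>i<m. (lie f ^^ i) (\<lambda>y. \<Gamma> (m - i) (psi f \<Gamma> h (m - i - 1) y)) x))"
    unfolding diff_conv_add_uminus
    by (intro Ck_plus Ck_minus c1 Ck_sum c2) auto
  then show ?thesis unfolding e by (rule Ck_cont)
qed

lemma cont_a:
  assumes m: "m \<ge> 1" and f: "Ck (m - 1) f" and g: "Ck (m - 1) g" and h: "Ck m h"
  shows "continuous_on UNIV (acbf f g h m)"
proof -
  define \<phi> where "\<phi> = (lie f ^^ (m - 1)) h"
  have p: "Ck (Suc 0) \<phi>" unfolding \<phi>_def
    by (rule Ck_funpow_lie[OF f]) (use h m in auto)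
  have gc: "continuous_on UNIV g" by (rule Ck_cont[OF g])
  have e: "acbf f g h m = (\<lambda>x. \<chi> j. frechet_derivative \<phi> (at x) (column j (g x)))"
    by (rule ext) (simp add: acbf_def lieg_def \<phi>_def)
  have "continuous_on UNIV (\<lambda>x. frechet_derivative \<phi> (at x) (column j (g x)))" for j
  proof (rule cont_frechet_field[OF p])
    show "continuous_on UNIV (\<lambda>x. column j (g x))"
      unfolding column_def by (intro continuous_on_vec_lambda continuous_on_component gc)
  qed
  then show ?thesis unfolding e by (intro continuous_on_vec_lambda)
qed

lemma mv_neg: "(A::real^'n^'m) *v (- y) = - (A *v y)"
  by (simp add: matrix_vector_mult_def sum_negf vec_eq_iff)

lemma zeta_eq:
  fixes f :: "real^'nx \<Rightarrow> real^'nx" and g :: "real^'nx \<Rightarrow> real^'nu^'nx"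
  assumes rk: "rank (g xe) = CARD('nu)" and ue: "0 = f xe + g xe *v ue"
  shows "zeta f g xe = ue"
proof -
  have inj: "inj ((*v) (g xe))" using rk full_rank_injective by blast
  have fe: "f xe = - (g xe *v ue)" using ue by (simp add: eq_neg_iff_add_eq_0 add.commute)
  have "zeta f g xe = pinv (g xe) *v (g xe *v ue)"
    unfolding zeta_def fe by (simp add: mv_neg)
  also have "\<dots> = ue" by (simp add: matrix_vector_mul_assoc pinv_left[OF inj])
  finally show ?thesis .
qed

lemma cont_mv:
  fixes g :: "real^'nx \<Rightarrow> real^'nu^'nx"
  assumes "continuous_on UNIV g"
  shows "continuous_on UNIV (\<lambda>p::(real^'nx) \<times> (real^'nu). g (fst p) *v snd p)"
proof -
  have gf: "continuous_on UNIV (\<lambda>p::(real^'nx) \<times> (real^'nu). g (fst p))"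
    using continuous_on_compose2[OF assms continuous_on_fst[OF continuous_on_id]] by simp
  show ?thesis
    unfolding matrix_vector_mult_def
    by (intro continuous_on_vec_lambda continuous_on_sum continuous_on_mult continuous_on_component
        gf continuous_on_snd continuous_on_id)
qed




theorem proposition4:
  fixes f :: "real^'nx \<Rightarrow> real^'nx" and g :: "real^'nx \<Rightarrow> real^'nu^'nx"
    and h :: "real^'nx \<Rightarrow> real" and m :: nat and \<Gamma> :: "nat \<Rightarrow> real \<Rightarrow> real"
    and X :: "(real^'nx) set" and U :: "(real^'nu) set"
    and c :: "real^'nx \<Rightarrow> real^'nu" and d :: "real \<Rightarrow> real \<Rightarrow> real"
    and un :: "real^'nx \<Rightarrow> real^'nu"
  assumes m_pos: "m \<ge> 1"
    and f_lip: "\<exists>L. L-lipschitz_on UNIV f" and g_lip: "\<exists>L. L-lipschitz_on UNIV g"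
    and f_smooth: "Ck (m - 1) f" and g_smooth: "Ck (m - 1) g" and h_smooth: "Ck m h"
    and reldeg: "\<forall>i. i + 2 \<le> m \<longrightarrow> (\<forall>x. lieg g ((lie f ^^ i) h) x = 0)"
    and Gamma: "\<forall>i\<in>{1..m}. classK (\<Gamma> i) \<and> Ck (m - i) (\<Gamma> i)"
    and X_cpt: "compact X" and U_cpt: "compact U" and U_cvx: "convex U"
    and Xe_closed: "closed (equilibria f g U)" and Xe_cvx: "convex (equilibria f g U)"
    and Xe_rank: "\<forall>xe\<in>equilibria f g U. rank (g xe) = CARD('nu)"
    and c_orth: "\<forall>x\<in>X. c x \<bullet> acbf f g h m x = 0"
    and c_cont: "continuous_on X c"
    and d_cont: "continuous_on UNIV (\<lambda>p. d (fst p) (snd p))" and d_pos: "d 0 0 > 0"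
    and feasible: "\<forall>x\<in>X. feas f g h m \<Gamma> U c d x \<noteq> {}"
    and interior_sol: "\<forall>x\<in>X. pi' f g h m \<Gamma> U c d un x \<notin> frontier U"
    and a_nz: "\<forall>x\<in>X. acbf f g h m x \<noteq> 0"
    and c_nz: "\<forall>x\<in>X. c x \<noteq> 0"
    and un_cont: "continuous_on X un"
  shows "continuous_on X (pi' f g h m \<Gamma> U c d un)"
proof -
  define Xe where "Xe = equilibria f g U"
  define P where "P = closest_point Xe"
  define z where "z x = zeta f g (P x)" for x
  define E where "E x = d (h x) (norm (x - P x)) + c x \<bullet> z x" for x
  have G: "\<forall>i\<in>{1..m}. Ck (m - i) (\<Gamma> i)" using Gamma by blast
  have fc: "continuous_on UNIV f" by (rule Ck_cont[OF f_smooth])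
  have gc: "continuous_on UNIV g" by (rule Ck_cont[OF g_smooth])
  have hc: "continuous_on UNIV h" by (rule Ck_cont[OF h_smooth])
  have Pc: "continuous_on UNIV P"
  proof (cases "Xe = {}")
    case True
    have "P x = P y" for x y unfolding P_def True closest_point_def by simp
    then have "P = (\<lambda>x. P 0)" by (simp add: fun_eq_iff)
    then show ?thesis by (metis continuous_on_const)
  next
    case False
    then show ?thesis unfolding P_def Xe_def using Xe_closed Xe_cvx
      by (intro continuous_on_closest_point) (auto simp: Xe_def)
  qed
  have zc: "continuous_on UNIV z"
  proof (cases "Xe = {}")
    case True
    have "P x = P y" for x y unfolding P_def True closest_point_def by simp
    then have "z = (\<lambda>x. z 0)" unfolding z_def by (metis)
    then show ?thesis by (metis continuous_on_const)
  next
    case False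
    have PXe: "P x \<in> Xe" for x unfolding P_def using closest_point_in_set[OF _ False] Xe_closed Xe_def by blast
    have ze: "zeta f g xe \<in> U \<and> 0 = f xe + g xe *v zeta f g xe" if xe: "xe \<in> Xe" for xe
    proof -
      obtain ue where "ue \<in> U" "0 = f xe + g xe *v ue" using xe unfolding Xe_def equilibria_def by blast
      moreover have "zeta f g xe = ue" using zeta_eq[of g xe f ue] Xe_rank xe \<open>0 = f xe + g xe *v ue\<close>
        unfolding Xe_def by blast
      ultimately show ?thesis by simp
    qed
    have uniq: "u = zeta f g xe" if "xe \<in> Xe" "u \<in> U" "0 = f xe + g xe *v u" for xe u
      using zeta_eq[of g xe f u] Xe_rank that unfolding Xe_def by metis
    have zXe: "continuous_on Xe (zeta f g)"
    proof (rule continuous_from_closed_graph[OF U_cpt])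
      show "zeta f g \<in> Xe \<rightarrow> U" using ze by blast
      have eq: "(\<lambda>x. (x, zeta f g x)) ` Xe = (Xe \<times> U) \<inter> {p. f (fst p) + g (fst p) *v snd p = 0}"
      proof
        show "(\<lambda>x. (x, zeta f g x)) ` Xe \<subseteq> (Xe \<times> U) \<inter> {p. f (fst p) + g (fst p) *v snd p = 0}"
          using ze by force
        show "(Xe \<times> U) \<inter> {p. f (fst p) + g (fst p) *v snd p = 0} \<subseteq> (\<lambda>x. (x, zeta f g x)) ` Xe"
        proof
          fix p assume p: "p \<in> (Xe \<times> U) \<inter> {p. f (fst p) + g (fst p) *v snd p = 0}"
          then have "snd p = zeta f g (fst p)" using uniq[of "fst p" "snd p"] by auto
          then have "p = (\<lambda>x. (x, zeta f g x)) (fst p)" by (simp add: prod_eq_iff)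
          then show "p \<in> (\<lambda>x. (x, zeta f g x)) ` Xe" using p by (intro image_eqI) auto
        qed
      qed
      have c1: "continuous_on UNIV (\<lambda>p::(real^'nx) \<times> (real^'nu). f (fst p) + g (fst p) *v snd p)"
        using continuous_on_compose2[OF fc continuous_on_fst[OF continuous_on_id]] cont_mv[OF gc]
        by (intro continuous_on_add) auto
      have "closed {p::(real^'nx) \<times> (real^'nu). f (fst p) + g (fst p) *v snd p = 0}"
        by (rule closed_Collect_eq[OF c1 continuous_on_const])
      then show "closed ((\<lambda>x. (x, zeta f g x)) ` Xe)"
        unfolding eq using Xe_closed compact_imp_closed[OF U_cpt] unfolding Xe_def
        by (intro closed_Int closed_Times) auto
    qed
    show ?thesis unfolding z_def
      using continuous_on_compose2[OF zXe Pc] PXe by blast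
  qed
  have Ec: "continuous_on X E"
  proof -
    have "continuous_on UNIV (\<lambda>x. (h x, norm (x - P x)))"
      using hc Pc by (intro continuous_on_Pair continuous_on_norm continuous_on_diff continuous_on_id) auto
    then have "continuous_on UNIV (\<lambda>x. d (h x) (norm (x - P x)))"
      using continuous_on_compose2[OF d_cont, of UNIV "\<lambda>x. (h x, norm (x - P x))"] by simp
    then show ?thesis unfolding E_def
      using c_cont continuous_on_subset[OF zc] continuous_on_subset
      by (intro continuous_on_add continuous_on_inner) (auto intro: continuous_on_subset)
  qed
  have feq: "feas f g h m \<Gamma> U c d x = {u\<in>U. acbf f g h m x \<bullet> u \<ge> bcbf f \<Gamma> h m x \<and> c x \<bullet> u \<ge> E x}" for x
    unfolding feas_def Let_def E_def z_def P_def Xe_def by (auto simp: inner_diff_right algebra_simps)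
  have peq: "pi' f g h m \<Gamma> U c d un = (\<lambda>x. arg_min_on (\<lambda>u. (norm (u - un x))\<^sup>2)
       {u\<in>U. acbf f g h m x \<bullet> u \<ge> bcbf f \<Gamma> h m x \<and> c x \<bullet> u \<ge> E x})"
    by (rule ext) (simp only: pi'_def feq)
  show ?thesis unfolding peq
  proof (rule argmin_cont[OF U_cpt U_cvx X_cpt])
    show "continuous_on X (acbf f g h m)"
      by (rule continuous_on_subset[OF cont_a[OF m_pos f_smooth g_smooth h_smooth]]) simp
    show "continuous_on X (bcbf f \<Gamma> h m)"
      by (rule continuous_on_subset[OF cont_b[OF m_pos f_smooth h_smooth G]]) simp
  qed (use c_cont Ec un_cont a_nz c_nz c_orth feasible interior_sol in \<open>simp_all add: feq peq\<close>)
qed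


end
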